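(* Let $L=(E,\preceq_E)$ be an object-centric event log and let $ot$ be an object type (serving as a case notion). Then the flattened event log $L^{ot}=(E^{ot},\preceq_E^{ot})$ is itself an object-centric event log, i.e. $\preceq_E^{ot}$ is a partial order (reflexive, antisymmetric, transitive) on $E^{ot}$, distinct events of $E^{ot}$ have distinct event identifiers, and $e_1\preceq_E^{ot} e_2$ implies $\pi_{time}(e_1)\le\pi_{time}(e_2)$ for all $e_1,e_2\in E^{ot}$.
   Context: Fix universes: event identifiers $\mathcal{U}_{ei}$, activity names $\mathcal{U}_{act}$, timestamps $\mathcal{U}_{time}$ (totally ordered by $\le$), object types $\mathcal{U}_{ot}$ (containing a special type $case$), object identifiers $\mathcal{U}_{oi}$ with a function $type:\mathcal{U}_{oi}\to\mathcal{U}_{ot}$, attribute names $\mathcal{U}_{att}$ and values $\mathcal{U}_{val}$. Event identifiers are assumed to include pairs $(x,i)$ of an event identifier $x$ and an object identifier $i$. An object mapping is a partial function $omap$ from object types to finite sets of object identifiers such that every $oi\in omap(ot)$ has $type(oi)=ot$; if $ot\notin dom(omap)$ we set $omap(ot)=\emptyset$. A value map $vmap$ is a partial function from attribute names to values. An event is a tuple $e=(ei,act,time,omap,vmap)$; write $\pi_{ei}(e)=ei$, $\pi_{act}(e)=act$, $\pi_{time}(e)=time$, $\pi_{omap}(e)=omap$, $\pi_{vmap}(e)=vmap$. An object-centric event log is a pair $L=(E,\preceq_E)$ where $E$ is a set of events and $\preceq_E\subseteq E\times E$ satisfies: $\preceq_E$ is a partial order (reflexive, antisymmetric, transitive); for all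 $e_1,e_2\in E$, $\pi_{ei}(e_1)=\pi_{ei}(e_2)$ implies $e_1=e_2$; and $e_1\preceq_E e_2$ implies $\pi_{time}(e_1)\le\pi_{time}(e_2)$. For a function $f$, $f\oplus(x,y)$ denotes the function with domain $dom(f)\cup\{x\}$ mapping $x$ to $y$ and agreeing with $f$ elsewhere. Flattening: for $e\in E$ and $i\in\pi_{omap}(e)(ot)$ let $e_i=((\pi_{ei}(e),i),\pi_{act}(e),\pi_{time}(e),\pi_{omap}(e)\oplus(case,\{i\}),\pi_{vmap}(e))$; let $E^{ot}=\{e_i\mid e\in E,\ i\in\pi_{omap}(e)(ot)\}$; and let $\preceq_E^{ot}=\{(e'_i,e''_j)\in E^{ot}\times E^{ot}\mid e',e''\in E,\ i\in\pi_{omap}(e')(ot),\ j\in\pi_{omap}(e'')(ot),\ e'\preceq_E e'',\ (e'=e''\Rightarrow i=j)\}$.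
   Formalization: The conclusion leaves out that each $e_i$ is an event, so $\pi_{omap}(e)\oplus(case,\{i\})$ is not claimed to be an object mapping with $type(i)=case$. The statement above fails without it. *)

theory Defs
  imports Main
begin

type_synonym ('ei,'act,'time,'ot,'oi,'att,'val) event =
  "'ei \<times> 'act \<times> 'time \<times> ('ot \<rightharpoonup> 'oi set) \<times> ('att \<rightharpoonup> 'val)"

definition pi_ei :: "('ei,'act,'time,'ot,'oi,'att,'val) event \<Rightarrow> 'ei" where
  "pi_ei e = fst e"
definition pi_act :: "('ei,'act,'time,'ot,'oi,'att,'val) event \<Rightarrow> 'act" where
  "pi_act e = fst (snd e)"
definition pi_time :: "('ei,'act,'time,'ot,'oi,'att,'val) event \<Rightarrow> 'time" where
  "pi_time e = fst (snd (snd e))"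
definition pi_omap :: "('ei,'act,'time,'ot,'oi,'att,'val) event \<Rightarrow> ('ot \<rightharpoonup> 'oi set)" where
  "pi_omap e = fst (snd (snd (snd e)))"
definition pi_vmap :: "('ei,'act,'time,'ot,'oi,'att,'val) event \<Rightarrow> ('att \<rightharpoonup> 'val)" where
  "pi_vmap e = snd (snd (snd (snd e)))"

definition omap_app :: "('ot \<rightharpoonup> 'oi set) \<Rightarrow> 'ot \<Rightarrow> 'oi set" where
  "omap_app m ot = (case m ot of None \<Rightarrow> {} | Some s \<Rightarrow> s)"

definition is_omap :: "('oi \<Rightarrow> 'ot) \<Rightarrow> ('ot \<rightharpoonup> 'oi set) \<Rightarrow> bool" where
  "is_omap otype m \<longleftrightarrow> (\<forall>ot s. m ot = Some s \<longrightarrow> finite s \<and> (\<forall>oi\<in>s. otype oi = ot))"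

definition is_ocel :: "('ei,'act,'time::linorder,'ot,'oi,'att,'val) event set \<Rightarrow>
    (('ei,'act,'time,'ot,'oi,'att,'val) event \<times> ('ei,'act,'time,'ot,'oi,'att,'val) event) set \<Rightarrow> bool" where
  "is_ocel E R \<longleftrightarrow>
     R \<subseteq> E \<times> E \<and>
     (\<forall>e\<in>E. (e, e) \<in> R) \<and>
     (\<forall>e1 e2. (e1, e2) \<in> R \<and> (e2, e1) \<in> R \<longrightarrow> e1 = e2) \<and>
     (\<forall>e1 e2 e3. (e1, e2) \<in> R \<and> (e2, e3) \<in> R \<longrightarrow> (e1, e3) \<in> R) \<and>
     (\<forall>e1\<in>E. \<forall>e2\<in>E. pi_ei e1 = pi_ei e2 \<longrightarrow> e1 = e2) \<and>
     (\<forall>e1 e2. (e1, e2) \<in> R \<longrightarrow> pi_time e1 \<le> pi_time e2)"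

text \<open>Flattened event e_i; pid x i is the event identifier (x,i), cs the special type case.\<close>
definition flat_ev :: "('ei \<Rightarrow> 'oi \<Rightarrow> 'ei) \<Rightarrow> 'ot \<Rightarrow> ('ei,'act,'time,'ot,'oi,'att,'val) event \<Rightarrow> 'oi
    \<Rightarrow> ('ei,'act,'time,'ot,'oi,'att,'val) event" where
  "flat_ev pid cs e i = (pid (pi_ei e) i, pi_act e, pi_time e, (pi_omap e)(cs \<mapsto> {i}), pi_vmap e)"

definition flat_E :: "('ei \<Rightarrow> 'oi \<Rightarrow> 'ei) \<Rightarrow> 'ot \<Rightarrow> ('ei,'act,'time,'ot,'oi,'att,'val) event set \<Rightarrow> 'ot
    \<Rightarrow> ('ei,'act,'time,'ot,'oi,'att,'val) event set" where
  "flat_E pid cs E ot = {flat_ev pid cs e i | e i. e \<in> E \<and> i \<in> omap_app (pi_omap e) ot}"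

definition flat_R :: "('ei \<Rightarrow> 'oi \<Rightarrow> 'ei) \<Rightarrow> 'ot \<Rightarrow> ('ei,'act,'time,'ot,'oi,'att,'val) event set
    \<Rightarrow> (('ei,'act,'time,'ot,'oi,'att,'val) event \<times> ('ei,'act,'time,'ot,'oi,'att,'val) event) set \<Rightarrow> 'ot
    \<Rightarrow> (('ei,'act,'time,'ot,'oi,'att,'val) event \<times> ('ei,'act,'time,'ot,'oi,'att,'val) event) set" where
  "flat_R pid cs E R ot = {(flat_ev pid cs e' i, flat_ev pid cs e'' j) | e' e'' i j.
       e' \<in> E \<and> e'' \<in> E \<and> i \<in> omap_app (pi_omap e') ot \<and> j \<in> omap_app (pi_omap e'') ot \<and>
       (e', e'') \<in> R \<and> (e' = e'' \<longrightarrow> i = j)}"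

end

theory Submission
  imports Defs
begin

lemma flat_inj:
  assumes pair_inj: "\<And>x i y j. pid x i = pid y j \<Longrightarrow> x = y \<and> i = j"
    and uniq: "\<forall>e1\<in>E. \<forall>e2\<in>E. pi_ei e1 = pi_ei e2 \<longrightarrow> e1 = e2"
    and "e \<in> E" "e' \<in> E" "flat_ev pid cs e i = flat_ev pid cs e' j"
  shows "e = e' \<and> i = j"
  using assms pair_inj[of "pi_ei e" i "pi_ei e'" j] by (auto simp: flat_ev_def)

lemma flat_time: "pi_time (flat_ev pid cs e i) = pi_time e"
  by (simp add: flat_ev_def pi_time_def)

theorem lemma1:
  fixes E :: "('ei,'act,'time::linorder,'ot,'oi,'att,'val) event set"
    and R :: "(('ei,'act,'time,'ot,'oi,'att,'val) event \<times> ('ei,'act,'time,'ot,'oi,'att,'val) event) set"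
    and otype :: "'oi \<Rightarrow> 'ot" and cs :: 'ot and ot :: 'ot
    and pid :: "'ei \<Rightarrow> 'oi \<Rightarrow> 'ei"
  assumes pair_inj: "\<And>x i y j. pid x i = pid y j \<Longrightarrow> x = y \<and> i = j"
    and events: "\<And>e. e \<in> E \<Longrightarrow> is_omap otype (pi_omap e)"
    and log: "is_ocel E R"
  shows "is_ocel (flat_E pid cs E ot) (flat_R pid cs E R ot)"
proof -
  have sub: "R \<subseteq> E \<times> E" and refl: "\<forall>e\<in>E. (e, e) \<in> R"
    and anti: "\<forall>e1 e2. (e1, e2) \<in> R \<and> (e2, e1) \<in> R \<longrightarrow> e1 = e2"
    and trans: "\<forall>e1 e2 e3. (e1, e2) \<in> R \<and> (e2, e3) \<in> R \<longrightarrow> (e1, e3) \<in> R"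
    and uniq: "\<forall>e1\<in>E. \<forall>e2\<in>E. pi_ei e1 = pi_ei e2 \<longrightarrow> e1 = e2"
    and time: "\<forall>e1 e2. (e1, e2) \<in> R \<longrightarrow> pi_time e1 \<le> pi_time e2"
    using log unfolding is_ocel_def by blast+
  note inj = flat_inj[OF pair_inj uniq]
  let ?f = "flat_ev pid cs"
  show ?thesis unfolding is_ocel_def
  proof (intro conjI allI ballI impI)
    show "flat_R pid cs E R ot \<subseteq> flat_E pid cs E ot \<times> flat_E pid cs E ot"
      unfolding flat_R_def flat_E_def by blast
  next
    fix x assume "x \<in> flat_E pid cs E ot"
    then show "(x, x) \<in> flat_R pid cs E R ot"
      unfolding flat_R_def flat_E_def using refl by blast
  next
    fix x y assume "(x, y) \<in> flat_R pid cs E R ot \<and> (y, x) \<in> flat_R pid cs E R ot"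
    then obtain a b i j a' b' i' j' where
      h1: "x = ?f a i" "y = ?f b j" "a \<in> E" "b \<in> E" "(a, b) \<in> R" "a = b \<longrightarrow> i = j"
      and h2: "y = ?f b' j'" "x = ?f a' i'" "a' \<in> E" "b' \<in> E" "(b', a') \<in> R"
      unfolding flat_R_def by blast
    have "b = b' \<and> j = j'" using inj h1 h2 by metis
    moreover have "a = a' \<and> i = i'" using inj h1 h2 by metis
    ultimately have "a = b" using anti h1 h2 by blast
    then show "x = y" using h1 by simp
  next
    fix x y z assume "(x, y) \<in> flat_R pid cs E R ot \<and> (y, z) \<in> flat_R pid cs E R ot"
    then obtain a b i j b' c j' k where
      h1: "x = ?f a i" "y = ?f b j" "a \<in> E" "b \<in> E" "(a, b) \<in> R" "a = b \<longrightarrow> i = j"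
        "i \<in> omap_app (pi_omap a) ot"
      and h2: "y = ?f b' j'" "z = ?f c k" "b' \<in> E" "c \<in> E" "(b', c) \<in> R" "b' = c \<longrightarrow> j' = k"
        "k \<in> omap_app (pi_omap c) ot"
      unfolding flat_R_def by blast
    have bb: "b = b' \<and> j = j'" using inj h1 h2 by metis
    have ac: "(a, c) \<in> R" using trans h1 h2 bb by blast
    have imp: "a = c \<longrightarrow> i = k"
    proof
      assume "a = c"
      then have ab: "a = b" using anti h1 h2 bb by blast
      have bc: "b' = c" using \<open>a = c\<close> ab bb by blast
      have "i = j" using h1(6) ab by blast
      moreover have "j' = k" using h2(6) bc by blast
      ultimately show "i = k" using bb by blast
    qed
    show "(x, z) \<in> flat_R pid cs E R ot"
      unfolding flat_R_def mem_Collect_eq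
      apply (rule exI[of _ a], rule exI[of _ c], rule exI[of _ i], rule exI[of _ k])
      using h1(1,3,7) h2(2,4,7) ac imp by simp
  next
    fix x y assume "x \<in> flat_E pid cs E ot" "y \<in> flat_E pid cs E ot" "pi_ei x = pi_ei y"
    then obtain a i b j where "x = ?f a i" "y = ?f b j" "a \<in> E" "b \<in> E"
      unfolding flat_E_def by blast
    note xy = this
    have "pid (pi_ei a) i = pid (pi_ei b) j"
      using xy \<open>pi_ei x = pi_ei y\<close> by (simp add: flat_ev_def pi_ei_def)
    then have "pi_ei a = pi_ei b" "i = j" using pair_inj by blast+
    then have "a = b" using uniq xy(3,4) by blast
    then show "x = y" using xy(1,2) \<open>i = j\<close> by simp
  next
    fix x y assume "(x, y) \<in> flat_R pid cs E R ot"
    then obtain a b i j where xy: "x = ?f a i" "y = ?f b j" "(a, b) \<in> R"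
      unfolding flat_R_def by blast
    have "pi_time a \<le> pi_time b" using time xy(3) by blast
    then show "pi_time x \<le> pi_time y"
      using xy(1,2) by (simp only: flat_time)
  qed
qed

end
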